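(* Let $X$ be a vector space over a field $\mathbb{k}$ and let $T:X\to X$ be a $\mathbb{k}$-linear map. Then $T$ has no non-trivial finite dimensional invariant subspaces if and only if there exist a set $A$, a subspace $Y$ of $\mathcal{R}^{(A)}$ invariant under $M^{(A)}$, and a linear bijection $J:X\to Y$ such that $JTx=M^{(A)}Jx$ for all $x\in X$ (i.e. $T$ is similar to the restriction of $M^{(A)}$ to an invariant subspace).
   Context: $\mathcal{R}=\mathbb{k}(t)$ is the field of rational functions in one variable over $\mathbb{k}$, and $M:\mathcal{R}\to\mathcal{R}$ is the $\mathbb{k}$-linear map $Mf(z)=zf(z)$. For a set $A$, $\mathcal{R}^{(A)}=\{f\in\mathcal{R}^A:\{\alpha\in A:f_\alpha\neq0\}\text{ is finite}\}$ is the algebraic direct sum of copies of $\mathcal{R}$ indexed by $A$, and $M^{(A)}:\mathcal{R}^{(A)}\to\mathcal{R}^{(A)}$ is defined by $(M^{(A)}f)_\alpha=Mf_\alpha$ for each $\alpha\in A$. A non-trivial subspace means a subspace different from $\{0\}$; a subspace $L$ is invariant for $T$ if $T(L)\subseteq L$. *)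

theory Defs
  imports Main "HOL-Library.Function_Algebras" "HOL-Computational_Algebra.Fraction_Field"
    "HOL-Computational_Algebra.Polynomial"
begin

type_synonym 'k ratfun = "'k poly fract"

definition rscale :: "'k::field \<Rightarrow> 'k ratfun \<Rightarrow> 'k ratfun" where
  "rscale c f = Fraction_Field.Fract [:c:] 1 * f"

definition Mop :: "'k::field ratfun \<Rightarrow> 'k ratfun" where
  "Mop f = Fraction_Field.Fract [:0, 1:] 1 * f"

definition sumscale :: "'k::field \<Rightarrow> ('a \<Rightarrow> 'k ratfun) \<Rightarrow> ('a \<Rightarrow> 'k ratfun)" where
  "sumscale c f = (\<lambda>\<alpha>. rscale c (f \<alpha>))"

text \<open>The algebraic direct sum R^(A): finitely supported families indexed by A
  (represented as functions vanishing outside A).\<close>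
definition dsum :: "'a set \<Rightarrow> ('a \<Rightarrow> 'k::field ratfun) set" where
  "dsum A = {f. finite {\<alpha>. f \<alpha> \<noteq> 0} \<and> (\<forall>\<alpha>. \<alpha> \<notin> A \<longrightarrow> f \<alpha> = 0)}"

definition MA :: "('a \<Rightarrow> 'k::field ratfun) \<Rightarrow> ('a \<Rightarrow> 'k ratfun)" where
  "MA f = (\<lambda>\<alpha>. Mop (f \<alpha>))"

definition no_fd_invariant :: "('k::field \<Rightarrow> 'x::ab_group_add \<Rightarrow> 'x) \<Rightarrow> ('x \<Rightarrow> 'x) \<Rightarrow> bool" where
  "no_fd_invariant scale T \<longleftrightarrow>
     \<not> (\<exists>L. module.subspace scale L \<and> L \<noteq> {0} \<and> T ` L \<subseteq> L \<and>
            (\<exists>B. finite B \<and> module.span scale B = L))"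

definition similar_to_MA_restr ::
  "('k::field \<Rightarrow> 'x::ab_group_add \<Rightarrow> 'x) \<Rightarrow> ('x \<Rightarrow> 'x) \<Rightarrow> 'a set \<Rightarrow> bool" where
  "similar_to_MA_restr scale T A \<longleftrightarrow>
     (\<exists>(Y :: ('a \<Rightarrow> 'k ratfun) set) J.
        Y \<subseteq> dsum A \<and> module.subspace sumscale Y \<and> MA ` Y \<subseteq> Y \<and>
        Vector_Spaces.linear scale sumscale J \<and> bij_betw J UNIV Y \<and>
        (\<forall>x. J (T x) = MA (J x)))"

end

theory Submission imports Defs begin

locale opsetup = vector_space scale for scale :: "'k::field \<Rightarrow> 'x::ab_group_add \<Rightarrow> 'x" +
  fixes T :: "'x \<Rightarrow> 'x"
  assumes linT: "Vector_Spaces.linear scale scale T"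
begin

sublocale TL: Vector_Spaces.linear scale scale T by (rule linT)

lemma funpow_add_x: "(T^^i) (x + y) = (T^^i) x + (T^^i) y"
  by (induction i) (auto simp: TL.add)

lemma funpow_scale_x: "(T^^i) (scale c x) = scale c ((T^^i) x)"
  by (induction i) (auto simp: TL.scale)

definition peval :: "'k poly \<Rightarrow> 'x \<Rightarrow> 'x" where
  "peval p x = (\<Sum>i<Suc (degree p). scale (coeff p i) ((T^^i) x))"

lemma peval_bound: "degree p < n \<Longrightarrow> peval p x = (\<Sum>i<n. scale (coeff p i) ((T^^i) x))"
  unfolding peval_def
  by (rule sum.mono_neutral_left) (auto simp: coeff_eq_0)

lemma peval_add: "peval (p + q) x = peval p x + peval q x"
proof -
  define n where "n = Suc (max (degree p) (degree q))"
  have "degree (p+q) < n" unfolding n_def using degree_add_le[of p "max (degree p) (degree q)" q] by simp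
  then show ?thesis
    by (simp add: peval_bound[of _ n] n_def scale_left_distrib sum.distrib)
qed

lemma peval_smult: "peval (smult c p) x = scale c (peval p x)"
proof -
  have "degree (smult c p) < Suc (degree p)" using degree_smult_le[of c p] by simp
  then show ?thesis
    by (simp add: peval_bound[of _ "Suc (degree p)"] peval_def scale_sum_right del: sum.lessThan_Suc)
qed

lemma peval_0 [simp]: "peval 0 x = 0"
  by (simp add: peval_def)

lemma peval_zero_x [simp]: "peval p 0 = 0"
proof -
  have "(T^^i) 0 = 0" for i by (induction i) (auto simp: TL.zero)
  then show ?thesis by (simp add: peval_def)
qed

lemma peval_const: "peval [:c:] x = scale c x"
  by (simp add: peval_def)

lemma peval_1 [simp]: "peval 1 x = x"
  by (simp add: peval_def)

lemma peval_xadd: "peval p (x + y) = peval p x + peval p y"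
  by (simp add: peval_def funpow_add_x scale_right_distrib sum.distrib)

lemma peval_xscale: "peval p (scale c x) = scale c (peval p x)"
  by (simp add: peval_def funpow_scale_x scale_sum_right scale_left_commute mult.commute del: sum.lessThan_Suc)

lemma peval_xsum: "peval p (\<Sum>a\<in>F. f a) = (\<Sum>a\<in>F. peval p (f a))"
  by (induction F rule: infinite_finite_induct) (auto simp: peval_xadd)

lemma peval_psum: "peval (\<Sum>a\<in>F. f a) x = (\<Sum>a\<in>F. peval (f a) x)"
  by (induction F rule: infinite_finite_induct) (auto simp: peval_add)

lemma peval_T: "peval p (T x) = T (peval p x)"
  by (simp add: peval_def TL.sum TL.scale funpow_swap1 del: sum.lessThan_Suc)

lemma peval_pCons: "peval (pCons a p) x = scale a x + T (peval p x)"
proof -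
  have "degree (pCons a p) < Suc (Suc (degree p))" using degree_pCons_le[of a p] by simp
  then have "peval (pCons a p) x = (\<Sum>i<Suc (Suc (degree p)). scale (coeff (pCons a p) i) ((T^^i) x))"
    by (rule peval_bound)
  also have "\<dots> = scale a x + (\<Sum>i<Suc (degree p). scale (coeff p i) ((T^^Suc i) x))"
    by (subst sum.lessThan_Suc_shift) simp
  also have "\<dots> = scale a x + T (peval p x)"
    by (simp add: peval_def TL.sum TL.scale del: sum.lessThan_Suc)
  finally show ?thesis .
qed

lemma peval_mult: "peval (p * q) x = peval p (peval q x)"
proof (induction p rule: pCons_induct)
  case (pCons a p)
  then show ?case by (simp add: peval_add peval_smult peval_pCons)
qed simp

lemma peval_neg: "peval (- p) x = - peval p x"
  using peval_add[of p "-p" x] by (simp add: eq_neg_iff_add_eq_0 add.commute)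

lemma peval_diff: "peval (p - q) x = peval p x - peval q x"
  using peval_add[of p "-q" x] by (simp add: peval_neg)

lemma peval_monom1: "peval (monom 1 i) x = (T^^i) x"
  by (induction i) (auto simp: monom_0 peval_const monom_Suc peval_pCons)


lemma orbit_in:
  assumes "T ` L \<subseteq> L" "v \<in> L" shows "(T^^i) v \<in> L"
  using assms by (induction i) auto

lemma annihilate:
  assumes B: "finite B" and inv: "T ` span B \<subseteq> span B" and v: "v \<in> span B"
  shows "\<exists>p. p \<noteq> 0 \<and> peval p v = 0"
proof -
  define n where "n = card B"
  define g where "g = (\<lambda>i. (T^^i) v)"
  show ?thesis
  proof (cases "inj_on g {..n}")
    case False
    then obtain i j where ij: "i \<noteq> j" "g i = g j" unfolding inj_on_def by blast
    define p where "p = monom (1::'k) i - monom 1 j"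
    have "coeff p i = 1" using ij by (simp add: p_def)
    then have "p \<noteq> 0" by auto
    moreover have "peval p v = 0" using ij by (simp add: p_def peval_diff peval_monom1 g_def)
    ultimately show ?thesis by blast
  next
    case True
    define S where "S = g ` {..n}"
    have cardS: "card S = Suc n" using True by (simp add: S_def card_image)
    have Ssub: "S \<subseteq> span B" using orbit_in[OF inv v] by (auto simp: S_def g_def)
    have "dependent S"
    proof (rule ccontr)
      assume "independent S"
      then have "card S \<le> card B" using independent_span_bound[OF B _ Ssub] by blast
      then show False using cardS n_def by simp
    qed
    then obtain t u where t: "finite t" "t \<subseteq> S" "(\<Sum>w\<in>t. scale (u w) w) = 0" "\<exists>w\<in>t. u w \<noteq> 0"
      unfolding dependent_explicit by blast
    define ind where "ind = the_inv_into {..n} g"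
    have gind: "g (ind w) = w" if "w \<in> S" for w
      using that True unfolding ind_def S_def by (auto intro: f_the_inv_into_f)
    define p where "p = (\<Sum>w\<in>t. smult (u w) (monom 1 (ind w)))"
    have "peval p v = (\<Sum>w\<in>t. scale (u w) (g (ind w)))"
      by (simp add: p_def peval_psum peval_smult peval_monom1 g_def)
    also have "\<dots> = (\<Sum>w\<in>t. scale (u w) w)"
      by (rule sum.cong) (use t gind in auto)
    finally have pv: "peval p v = 0" using t by simp
    obtain w0 where w0: "w0 \<in> t" "u w0 \<noteq> 0" using t by blast
    have "coeff p (ind w0) = (\<Sum>w\<in>t. if w = w0 then u w else 0)"
      unfolding p_def coeff_sum
    proof (rule sum.cong)
      fix w assume "w \<in> t"
      then have "ind w = ind w0 \<longleftrightarrow> w = w0" using gind t w0 by (metis subsetD)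
      then show "coeff (smult (u w) (monom 1 (ind w))) (ind w0) = (if w = w0 then u w else 0)"
        by auto
    qed simp
    also have "\<dots> = u w0" using w0 t by simp
    finally have "p \<noteq> 0" using w0 by auto
    with pv show ?thesis by blast
  qed
qed

lemma no_fd_tf:
  assumes nf: "no_fd_invariant scale T" and p: "p \<noteq> 0" and px: "peval p x = 0"
  shows "x = 0"
proof (rule ccontr)
  assume x: "x \<noteq> 0"
  define n where "n = degree p"
  show False
  proof (cases "n = 0")
    case True
    then have "p = [:coeff p 0:]" unfolding n_def by (metis degree_eq_zeroE coeff_pCons_0)
    then have "scale (coeff p 0) x = 0" using px peval_const by metis
    with x p True n_def show False by (metis leading_coeff_0_iff scale_eq_0_iff)
  next
    case False
    define B where "B = (\<lambda>i. (T^^i) x) ` {..<n}"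
    have xB: "x \<in> span B" using False by (auto simp: B_def intro!: span_base image_eqI[of x _ 0])
    have lc: "coeff p n \<noteq> 0" using p n_def by simp
    have "peval p x = (\<Sum>i<n. scale (coeff p i) ((T^^i) x)) + scale (coeff p n) ((T^^n) x)"
      by (simp add: peval_def n_def)
    then have eq: "scale (coeff p n) ((T^^n) x) = - (\<Sum>i<n. scale (coeff p i) ((T^^i) x))"
      using px by (simp add: eq_neg_iff_add_eq_0 add.commute)
    have "- (\<Sum>i<n. scale (coeff p i) ((T^^i) x)) \<in> span B"
      by (intro span_neg span_sum span_scale span_base) (auto simp: B_def)
    then have "scale (inverse (coeff p n)) (scale (coeff p n) ((T^^n) x)) \<in> span B"
      using eq by (metis span_scale)
    then have Tn: "(T^^n) x \<in> span B" using lc by simp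
    have "T ` B \<subseteq> span B"
    proof
      fix y assume "y \<in> T ` B"
      then obtain i where i: "i < n" "y = (T^^Suc i) x" by (auto simp: B_def)
      show "y \<in> span B"
      proof (cases "Suc i < n")
        case True
        then have "(T^^Suc i) x \<in> B" unfolding B_def by blast
        then show ?thesis using i by (auto intro!: span_base)
      next
        case False then have "Suc i = n" using i by simp
        then show ?thesis using i Tn by simp
      qed
    qed
    then have "span (T ` B) \<subseteq> span B" by (simp add: span_minimal)
    then have inv: "T ` span B \<subseteq> span B" by (simp add: TL.span_image)
    have "span B \<noteq> {0}" using xB x by auto
    moreover have "finite B" by (simp add: B_def)
    ultimately show False using nf inv unfolding no_fd_invariant_def by blast
  qed
qed


end

lemma vs_sumscale: "vector_space (sumscale :: 'k::field \<Rightarrow> ('a \<Rightarrow> 'k ratfun) \<Rightarrow> _)"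
proof
  fix a b :: 'k and x y :: "'a \<Rightarrow> 'k ratfun"
  show "sumscale a (x + y) = sumscale a x + sumscale a y"
    by (simp add: sumscale_def rscale_def fun_eq_iff distrib_left)
  have "Fraction_Field.Fract [:a + b:] 1 = Fraction_Field.Fract [:a:] 1 + Fraction_Field.Fract [:b:] 1"
    by simp
  note h = this
  show "sumscale (a + b) x = sumscale a x + sumscale b x"
    unfolding sumscale_def rscale_def plus_fun_def
    by (rule ext) (simp only: h distrib_right)
  have "Fraction_Field.Fract [:a:] 1 * Fraction_Field.Fract [:b:] 1 = Fraction_Field.Fract [:a * b:] 1"
    by (simp add: mult.commute)
  then show "sumscale a (sumscale b x) = sumscale (a * b) x"
    by (simp add: sumscale_def rscale_def fun_eq_iff mult.assoc[symmetric])
  have "Fraction_Field.Fract [:1::'k:] 1 = 1" by (simp add: One_fract_def one_pCons)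
  then show "sumscale 1 x = x"
    by (simp add: sumscale_def rscale_def fun_eq_iff)
qed

lemma Fract_pCons: "Fraction_Field.Fract (pCons a p) 1 = Fraction_Field.Fract [:a:] 1 + Fraction_Field.Fract [:0,1:] 1 * Fraction_Field.Fract (p::'k::field poly) 1"
proof -
  have "pCons a p = [:a:] + [:0,1:] * p" by simp
  then show ?thesis by simp
qed

context opsetup begin

lemma D2:
  assumes "similar_to_MA_restr scale T A"
  shows "no_fd_invariant scale T"
proof -
  obtain Y J where Y: "Y \<subseteq> dsum A" and lin: "Vector_Spaces.linear scale sumscale J"
    and bij: "bij_betw J UNIV Y" and JT: "\<And>x. J (T x) = MA (J x)"
    using assms unfolding similar_to_MA_restr_def by blast
  interpret JL: Vector_Spaces.linear scale sumscale J by (rule lin)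
  have Jp: "J (peval p x) = (\<lambda>\<alpha>. Fraction_Field.Fract p 1 * J x \<alpha>)" for p x
  proof (induction p rule: pCons_induct)
    case 0 then show ?case by (simp add: Zero_fract_def[symmetric] zero_fun_def)
  next
    case (pCons a p)
    have "J (peval (pCons a p) x) = sumscale a (J x) + MA (J (peval p x))"
      by (simp only: peval_pCons JL.add JL.scale JT)
    also have "\<dots> = (\<lambda>\<alpha>. Fraction_Field.Fract (pCons a p) 1 * J x \<alpha>)"
      unfolding pCons.IH sumscale_def rscale_def MA_def Mop_def plus_fun_def
      by (rule ext) (subst Fract_pCons, simp only: distrib_right mult.assoc)
    finally show ?case .
  qed
  show ?thesis unfolding no_fd_invariant_def
  proof
    assume "\<exists>L. subspace L \<and> L \<noteq> {0} \<and> T ` L \<subseteq> L \<and> (\<exists>B. finite B \<and> span B = L)"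
    then obtain B where B: "finite B" "span B \<noteq> {0}" "T ` span B \<subseteq> span B" by blast
    then obtain v where v: "v \<in> span B" "v \<noteq> 0" using span_zero by blast
    obtain p where p: "p \<noteq> 0" "peval p v = 0" using annihilate[OF B(1,3) v(1)] by blast
    have "(\<lambda>\<alpha>. Fraction_Field.Fract p 1 * J v \<alpha>) = 0" using Jp[of p v] p by simp
    moreover have "Fraction_Field.Fract p 1 \<noteq> 0" using p by (simp add: Zero_fract_def eq_fract)
    ultimately have "J v = 0" by (simp add: fun_eq_iff)
    then have "J v = J 0" by simp
    moreover have "inj J" using bij by (simp add: bij_betw_def)
    ultimately show False using v JL.zero by (metis injD)
  qed
qed

end

locale tfA = opsetup scale T for scale :: "'k::field \<Rightarrow> 'x::ab_group_add \<Rightarrow> 'x" and T +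
  fixes A :: "'x set"
  assumes tf: "\<And>p x. p \<noteq> 0 \<Longrightarrow> opsetup.peval scale T p x = 0 \<Longrightarrow> x = 0"
  and pA: "\<And>F q. finite F \<Longrightarrow> F \<subseteq> A \<Longrightarrow> (\<Sum>a\<in>F. opsetup.peval scale T (q a) a) = 0 \<Longrightarrow> \<forall>a\<in>F. q a = 0"
  and maxA: "\<And>x. x \<notin> A \<Longrightarrow> \<exists>F q. finite F \<and> F \<subseteq> insert x A \<and> (\<Sum>a\<in>F. opsetup.peval scale T (q a) a) = 0 \<and> (\<exists>a\<in>F. q a \<noteq> 0)"
begin

definition rep :: "'x \<Rightarrow> 'k poly \<Rightarrow> ('x \<Rightarrow> 'k poly) \<Rightarrow> bool" where
  "rep x p q \<longleftrightarrow> p \<noteq> 0 \<and> (\<exists>F. finite F \<and> F \<subseteq> A \<and> (\<forall>a. a \<notin> F \<longrightarrow> q a = 0) \<and>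
      peval p x = (\<Sum>a\<in>F. peval (q a) a))"

lemma sum_extend:
  assumes "finite G" "F \<subseteq> G" "\<forall>a. a \<notin> F \<longrightarrow> q a = 0"
  shows "(\<Sum>a\<in>F. peval (q a) a) = (\<Sum>a\<in>G. peval (q a) a)"
  by (rule sum.mono_neutral_left) (use assms in auto)

lemma rep_exists: "\<exists>p q. rep x p q"
proof (cases "x \<in> A")
  case True
  have "rep x 1 (\<lambda>a. if a = x then 1 else 0)"
    unfolding rep_def using True by (intro conjI exI[of _ "{x}"]) auto
  then show ?thesis by blast
next
  case False
  obtain F q where F: "finite F" "F \<subseteq> insert x A" "(\<Sum>a\<in>F. peval (q a) a) = 0" "\<exists>a\<in>F. q a \<noteq> 0"
    using maxA[OF False] by blast
  have xF: "x \<in> F \<and> q x \<noteq> 0"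
  proof (rule ccontr)
    assume n: "\<not> (x \<in> F \<and> q x \<noteq> 0)"
    have "(\<Sum>a\<in>F - {x}. peval (q a) a) = (\<Sum>a\<in>F. peval (q a) a)"
    proof (cases "x \<in> F")
      case True
      then have "(\<Sum>a\<in>F. peval (q a) a) = peval (q x) x + (\<Sum>a\<in>F - {x}. peval (q a) a)"
        using F(1) by (simp add: sum.remove)
      then show ?thesis using n True by simp
    qed simp
    then have "\<forall>a\<in>F - {x}. q a = 0" using pA[of "F - {x}" q] F by auto
    then show False using F(4) n by auto
  qed
  define q' where "q' = (\<lambda>a. if a \<in> F - {x} then - q a else 0)"
  have "peval (q x) x + (\<Sum>a\<in>F - {x}. peval (q a) a) = 0"
    using sum.remove[OF F(1), of x "\<lambda>a. peval (q a) a"] F(3) xF by simp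
  then have "peval (q x) x = - (\<Sum>a\<in>F - {x}. peval (q a) a)"
    by (simp add: eq_neg_iff_add_eq_0)
  also have "\<dots> = (\<Sum>a\<in>F - {x}. peval (q' a) a)"
    unfolding sum_negf[symmetric] by (rule sum.cong) (auto simp: q'_def peval_neg)
  finally have "rep x (q x) q'"
    unfolding rep_def using xF F by (intro conjI exI[of _ "F - {x}"]) (auto simp: q'_def)
  then show ?thesis by blast
qed

lemma rep_unique:
  assumes r: "rep x p q" and r': "rep x p' q'"
  shows "p' * q a = p * q' a"
proof -
  obtain F where F: "finite F" "F \<subseteq> A" "\<forall>a. a \<notin> F \<longrightarrow> q a = 0" "peval p x = (\<Sum>a\<in>F. peval (q a) a)"
    using r unfolding rep_def by blast
  obtain F' where F': "finite F'" "F' \<subseteq> A" "\<forall>a. a \<notin> F' \<longrightarrow> q' a = 0" "peval p' x = (\<Sum>a\<in>F'. peval (q' a) a)"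
    using r' unfolding rep_def by blast
  define G where "G = F \<union> F'"
  have G: "finite G" "G \<subseteq> A" using F F' by (auto simp: G_def)
  have e1: "peval p x = (\<Sum>a\<in>G. peval (q a) a)" using F sum_extend[of G F q] G by (auto simp: G_def)
  have e2: "peval p' x = (\<Sum>a\<in>G. peval (q' a) a)" using F' sum_extend[of G F' q'] G by (auto simp: G_def)
  have "peval (p' * p) x = (\<Sum>a\<in>G. peval (p' * q a) a)"
    by (simp add: peval_mult e1 peval_xsum)
  moreover have "peval (p * p') x = (\<Sum>a\<in>G. peval (p * q' a) a)"
    by (simp add: peval_mult e2 peval_xsum)
  ultimately have "(\<Sum>a\<in>G. peval (p' * q a - p * q' a) a) = 0"
    by (simp add: peval_diff sum_subtractf mult.commute)
  then have "\<forall>a\<in>G. p' * q a - p * q' a = 0" using pA[OF G, of "\<lambda>a. p' * q a - p * q' a"] by blast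
  then show ?thesis using F(3) F'(3) by (cases "a \<in> G") (auto simp: G_def)
qed

definition J :: "'x \<Rightarrow> ('x \<Rightarrow> 'k ratfun)" where
  "J x = (let pq = (SOME pq. rep x (fst pq) (snd pq)) in (\<lambda>a. Fraction_Field.Fract (snd pq a) (fst pq)))"

lemma J_rep: assumes "rep x p q" shows "J x = (\<lambda>a. Fraction_Field.Fract (q a) p)"
proof -
  define pq where "pq = (SOME pq. rep x (fst pq) (snd pq))"
  have "rep x (fst pq) (snd pq)" unfolding pq_def
    by (rule someI_ex) (use rep_exists in auto)
  then have r0: "rep x (fst pq) (snd pq)" .
  have nz: "fst pq \<noteq> 0" "p \<noteq> 0" using r0 assms by (auto simp: rep_def)
  have "Fraction_Field.Fract (snd pq a) (fst pq) = Fraction_Field.Fract (q a) p" for a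
    using rep_unique[OF assms r0, of a] nz by (simp add: eq_fract mult.commute)
  then show ?thesis by (simp add: J_def pq_def[symmetric] Let_def)
qed

lemma rep_add:
  assumes r: "rep x p q" and r': "rep y p' q'"
  shows "rep (x + y) (p * p') (\<lambda>a. p' * q a + p * q' a)"
proof -
  obtain F where F: "finite F" "F \<subseteq> A" "\<forall>a. a \<notin> F \<longrightarrow> q a = 0" "peval p x = (\<Sum>a\<in>F. peval (q a) a)"
    using r unfolding rep_def by blast
  obtain F' where F': "finite F'" "F' \<subseteq> A" "\<forall>a. a \<notin> F' \<longrightarrow> q' a = 0" "peval p' y = (\<Sum>a\<in>F'. peval (q' a) a)"
    using r' unfolding rep_def by blast
  define G where "G = F \<union> F'"
  have G: "finite G" "G \<subseteq> A" using F F' by (auto simp: G_def)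
  have e1: "peval p x = (\<Sum>a\<in>G. peval (q a) a)" using F sum_extend[of G F q] G by (auto simp: G_def)
  have e2: "peval p' y = (\<Sum>a\<in>G. peval (q' a) a)" using F' sum_extend[of G F' q'] G by (auto simp: G_def)
  have "peval (p * p') (x + y) = peval p' (peval p x) + peval p (peval p' y)"
    by (metis peval_xadd peval_mult mult.commute)
  also have "\<dots> = (\<Sum>a\<in>G. peval (p' * q a + p * q' a) a)"
    by (simp add: e1 e2 peval_xsum peval_add peval_mult sum.distrib)
  finally show ?thesis
    unfolding rep_def using r r' G F(3) F'(3)
    by (intro conjI exI[of _ G]) (auto simp: rep_def G_def)
qed

lemma rep_scale:
  assumes r: "rep x p q"
  shows "rep (scale c x) p (\<lambda>a. smult c (q a))"
proof -
  obtain F where F: "finite F" "F \<subseteq> A" "\<forall>a. a \<notin> F \<longrightarrow> q a = 0" "peval p x = (\<Sum>a\<in>F. peval (q a) a)"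
    using r unfolding rep_def by blast
  have "peval p (scale c x) = (\<Sum>a\<in>F. peval (smult c (q a)) a)"
    by (simp add: peval_xscale F(4) scale_sum_right peval_smult)
  then show ?thesis unfolding rep_def using r F by (intro conjI exI[of _ F]) (auto simp: rep_def)
qed

lemma rep_T:
  assumes r: "rep x p q"
  shows "rep (T x) p (\<lambda>a. pCons 0 (q a))"
proof -
  obtain F where F: "finite F" "F \<subseteq> A" "\<forall>a. a \<notin> F \<longrightarrow> q a = 0" "peval p x = (\<Sum>a\<in>F. peval (q a) a)"
    using r unfolding rep_def by blast
  have "peval p (T x) = (\<Sum>a\<in>F. peval (pCons 0 (q a)) a)"
    by (simp add: peval_T F(4) TL.sum peval_pCons)
  then show ?thesis unfolding rep_def using r F by (intro conjI exI[of _ F]) (auto simp: rep_def)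
qed

lemma J_add: "J (x + y) = J x + J y"
proof -
  obtain p q p' q' where r: "rep x p q" and r': "rep y p' q'" using rep_exists by blast
  have nz: "p \<noteq> 0" "p' \<noteq> 0" using r r' by (auto simp: rep_def)
  show ?thesis using J_rep[OF rep_add[OF r r']] J_rep[OF r] J_rep[OF r'] nz
    by (simp add: fun_eq_iff mult.commute)
qed

lemma J_scale: "J (scale c x) = sumscale c (J x)"
proof -
  obtain p q where r: "rep x p q" using rep_exists by blast
  show ?thesis using J_rep[OF rep_scale[OF r]] J_rep[OF r]
    by (simp add: fun_eq_iff sumscale_def rscale_def)
qed

lemma J_T: "J (T x) = MA (J x)"
proof -
  obtain p q where r: "rep x p q" using rep_exists by blast
  show ?thesis using J_rep[OF rep_T[OF r]] J_rep[OF r]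
    by (simp add: fun_eq_iff MA_def Mop_def)
qed

lemma J_dsum: "J x \<in> dsum A"
proof -
  obtain p q where r: "rep x p q" using rep_exists by blast
  obtain F where F: "finite F" "F \<subseteq> A" "\<forall>a. a \<notin> F \<longrightarrow> q a = 0"
    using r unfolding rep_def by blast
  have z: "Fraction_Field.Fract 0 p = 0" by (simp add: Zero_fract_def eq_fract(3))
  have "{a. J x a \<noteq> 0} \<subseteq> F" using F(3) z by (auto simp: J_rep[OF r])
  then have "finite {a. J x a \<noteq> 0}" using F(1) finite_subset by blast
  moreover have "\<forall>a. a \<notin> A \<longrightarrow> J x a = 0" using F z by (auto simp: J_rep[OF r])
  ultimately show ?thesis by (simp add: dsum_def)
qed

lemma J_zero: "J x = 0 \<Longrightarrow> x = 0"
proof -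
  assume J0: "J x = 0"
  obtain p q where r: "rep x p q" using rep_exists by blast
  obtain F where F: "p \<noteq> 0" "finite F" "F \<subseteq> A" "\<forall>a. a \<notin> F \<longrightarrow> q a = 0"
    "peval p x = (\<Sum>a\<in>F. peval (q a) a)"
    using r unfolding rep_def by blast
  have "Fraction_Field.Fract (q a) p = 0" for a using J0 J_rep[OF r] by (metis zero_fun_def)
  then have "q a = 0" for a using F(1) by (simp add: Zero_fract_def eq_fract)
  then have "peval p x = 0" using F(5) by simp
  then show "x = 0" using tf F(1) by blast
qed

lemma similar: "similar_to_MA_restr scale T A"
proof -
  have lin: "Vector_Spaces.linear scale sumscale J"
    unfolding Vector_Spaces.linear_iff using vector_space_axioms vs_sumscale J_add J_scale by blast
  interpret JL: Vector_Spaces.linear scale sumscale J by (rule lin)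
  have "inj J"
  proof (rule injI)
    fix x y assume "J x = J y"
    then have "J (x - y) = 0" by (simp add: JL.diff)
    then have "x - y = 0" by (rule J_zero)
    then show "x = y" by simp
  qed
  have sub: "module.subspace sumscale (range J)"
    using JL.subspace_image[OF subspace_UNIV] .
  show ?thesis unfolding similar_to_MA_restr_def
    apply (rule exI[of _ "range J"], rule exI[of _ J])
    using J_dsum sub J_T lin \<open>inj J\<close> by (auto simp: bij_betw_def J_T[symmetric])
qed

end

context opsetup begin

lemma D1:
  assumes nf: "no_fd_invariant scale T"
  shows "\<exists>A :: 'x set. similar_to_MA_restr scale T A"
proof -
  define P where "P = {S. \<forall>F q. finite F \<longrightarrow> F \<subseteq> S \<longrightarrow> (\<Sum>a\<in>F. peval (q a) a) = 0 \<longrightarrow> (\<forall>a\<in>F. q a = 0)}"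
  have "\<forall>C\<in>chains P. \<Union>C \<in> P"
  proof
    fix C assume C: "C \<in> chains P"
    show "\<Union>C \<in> P" unfolding P_def
    proof (intro CollectI allI impI)
      fix F q assume F: "finite F" "F \<subseteq> \<Union>C" "(\<Sum>a\<in>F. peval (q a) a) = 0"
      show "\<forall>a\<in>F. q a = 0"
      proof (cases "F = {}")
        case False
        then have "C \<noteq> {}" using F(2) by auto
        moreover have "subset.chain P C" using C by (simp add: chains_alt_def)
        ultimately obtain B where B: "B \<in> C" "F \<subseteq> B"
          using finite_subset_Union_chain[OF F(1,2)] by blast
        then have "B \<in> P" using C by (auto simp: chains_def)
        then show ?thesis using B F unfolding P_def by blast
      qed simp
    qed
  qed
  then obtain M where M: "M \<in> P" "\<And>X. X \<in> P \<Longrightarrow> M \<subseteq> X \<Longrightarrow> X = M"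
    using Zorn_Lemma[of P] by blast
  interpret tfA scale T M
  proof (unfold_locales)
    fix p x assume "p \<noteq> 0" "peval p x = 0" then show "x = 0" using no_fd_tf[OF nf] by blast
  next
    fix F q assume "finite F" "F \<subseteq> M" "(\<Sum>a\<in>F. peval (q a) a) = 0"
    then show "\<forall>a\<in>F. q a = 0" using M(1) unfolding P_def by blast
  next
    fix x assume x: "x \<notin> M"
    have "insert x M \<notin> P" using M(2)[of "insert x M"] x by blast
    then show "\<exists>F q. finite F \<and> F \<subseteq> insert x M \<and> (\<Sum>a\<in>F. peval (q a) a) = 0 \<and> (\<exists>a\<in>F. q a \<noteq> 0)"
      unfolding P_def by blast
  qed
  show ?thesis using similar by blast
qed

end

theorem theorem1p4:
  fixes scale :: "'k::field \<Rightarrow> 'x::ab_group_add \<Rightarrow> 'x"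
    and T :: "'x \<Rightarrow> 'x"
  assumes "vector_space scale"
    and "Vector_Spaces.linear scale scale T"
  shows "(no_fd_invariant scale T \<longleftrightarrow> (\<exists>A :: 'x set. similar_to_MA_restr scale T A))
       \<and> (\<forall>A :: 'a set. similar_to_MA_restr scale T A \<longrightarrow> no_fd_invariant scale T)"
proof -
  interpret opsetup scale T by (intro opsetup.intro opsetup_axioms.intro assms)
  have d2x: "\<And>A::'x set. similar_to_MA_restr scale T A \<Longrightarrow> no_fd_invariant scale T" by (rule D2)
  have d2a: "\<And>A::'a set. similar_to_MA_restr scale T A \<Longrightarrow> no_fd_invariant scale T" by (rule D2)
  show ?thesis using D1 d2x d2a by blast
qed

end
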